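(* Any protocol $P$ among $n$ players that achieves sender anonymity and is resistant against collusions of any $t<n-1$ players, where the only resources available are pairwise shared secret key bits, a reliable broadcast channel and public communication, uses at least $n(n-1)/2$ bits of pairwise shared key; i.e. its key-sharing graph must be the complete graph on $n$ nodes.
   Context: The key-sharing graph of the protocol is the undirected graph $G=(V,E)$ whose nodes are the players, with an edge between nodes $i$ and $j$ iff $i$ and $j$ share one bit of secret key; the number of pairwise shared key bits is $|E|$. Sender anonymity against collusions of $t$ players: for an adversary corrupting a set of $t$ players not including the sender $s$ and observing all communication $C$ and the randomness $G^t$ of the corrupted players, $\max_S\Pr[S=s\mid G^t,C]=\max_S\Pr[S=s]=1/(n-t)$, maximum over random variables $S$ depending only on $C$ and $G^t$. *)

theory Defs
  imports "HOL-Probability.Probability"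
begin

text \<open>Players are the natural numbers below n. A protocol runs for a fixed number
  of rounds; in each round every player broadcasts one symbol, computed from its own
  index, its own input (Some m if it is the sender of message m, None otherwise),
  its own key bits (those on edges of the key-sharing graph incident to it), its own
  private randomness and the public transcript so far.\<close>

record ('m, 'c, 'r) protocol =
  rounds :: nat
  rand   :: "nat \<Rightarrow> 'r pmf"
  msg    :: "nat \<Rightarrow> 'm option \<Rightarrow> (nat set \<Rightarrow> bool) \<Rightarrow> 'r \<Rightarrow> (nat \<Rightarrow> 'c) list \<Rightarrow> 'c"
  out    :: "nat \<Rightarrow> 'm option \<Rightarrow> (nat set \<Rightarrow> bool) \<Rightarrow> 'r \<Rightarrow> (nat \<Rightarrow> 'c) list \<Rightarrow> 'm"

definition complete_graph_edges :: "nat \<Rightarrow> nat set set" where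
  "complete_graph_edges n = {{i, j} | i j. i < n \<and> j < n \<and> i \<noteq> j}"

definition key_pmf :: "nat set set \<Rightarrow> (nat set \<Rightarrow> bool) pmf" where
  "key_pmf E = Pi_pmf E False (\<lambda>_. pmf_of_set (UNIV :: bool set))"

definition key_view :: "nat \<Rightarrow> (nat set \<Rightarrow> bool) \<Rightarrow> nat set \<Rightarrow> bool" where
  "key_view p k = (\<lambda>e. if p \<in> e then k e else False)"

definition inputs :: "nat \<Rightarrow> 'm \<Rightarrow> nat \<Rightarrow> 'm option" where
  "inputs s m = (\<lambda>p. if p = s then Some m else None)"

fun run_rounds :: "('m, 'c, 'r) protocol \<Rightarrow> nat \<Rightarrow> (nat \<Rightarrow> 'm option) \<Rightarrow>
    (nat set \<Rightarrow> bool) \<Rightarrow> (nat \<Rightarrow> 'r) \<Rightarrow> nat \<Rightarrow> (nat \<Rightarrow> 'c) list" where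
  "run_rounds P n x k \<rho> 0 = []"
| "run_rounds P n x k \<rho> (Suc r) =
     (let h = run_rounds P n x k \<rho> r
      in h @ [\<lambda>p. if p < n then msg P p (x p) (key_view p k) (\<rho> p) h else undefined])"

definition transcript :: "('m, 'c, 'r) protocol \<Rightarrow> nat \<Rightarrow> (nat \<Rightarrow> 'm option) \<Rightarrow>
    (nat set \<Rightarrow> bool) \<Rightarrow> (nat \<Rightarrow> 'r) \<Rightarrow> (nat \<Rightarrow> 'c) list" where
  "transcript P n x k \<rho> = run_rounds P n x k \<rho> (rounds P)"

definition rand_pmf :: "('m, 'c, 'r) protocol \<Rightarrow> nat \<Rightarrow> (nat \<Rightarrow> 'r) pmf" where
  "rand_pmf P n = Pi_pmf {..<n} undefined (rand P)"

definition correct :: "('m, 'c, 'r) protocol \<Rightarrow> nat \<Rightarrow> nat set set \<Rightarrow> bool" where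
  "correct P n E \<longleftrightarrow>
     (\<forall>s<n. \<forall>m. \<forall>k \<in> set_pmf (key_pmf E). \<forall>\<rho> \<in> set_pmf (rand_pmf P n). \<forall>p<n.
        out P p (inputs s m p) (key_view p k) (\<rho> p) (transcript P n (inputs s m) k \<rho>) = m)"

definition adv_view :: "('m, 'c, 'r) protocol \<Rightarrow> nat \<Rightarrow> nat set set \<Rightarrow> nat set \<Rightarrow> nat \<Rightarrow> 'm \<Rightarrow>
    ((nat \<Rightarrow> 'c) list \<times> (nat set \<Rightarrow> bool) \<times> (nat \<Rightarrow> 'r)) pmf" where
  "adv_view P n E T s m =
     do { k \<leftarrow> key_pmf E;
          \<rho> \<leftarrow> rand_pmf P n;
          return_pmf (transcript P n (inputs s m) k \<rho>,
                      (\<lambda>e. if e \<inter> T \<noteq> {} then k e else False),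
                      (\<lambda>p. if p \<in> T then \<rho> p else undefined)) }"

definition guess_prob :: "('m, 'c, 'r) protocol \<Rightarrow> nat \<Rightarrow> nat set set \<Rightarrow> nat set \<Rightarrow> 'm \<Rightarrow>
    ((nat \<Rightarrow> 'c) list \<times> (nat set \<Rightarrow> bool) \<times> (nat \<Rightarrow> 'r) \<Rightarrow> nat) \<Rightarrow> real" where
  "guess_prob P n E T m g =
     measure_pmf.prob
       (do { s \<leftarrow> pmf_of_set ({..<n} - T);
             v \<leftarrow> adv_view P n E T s m;
             return_pmf (s, v) })
       {(s, v). g v = s}"

definition sender_anonymous :: "('m, 'c, 'r) protocol \<Rightarrow> nat \<Rightarrow> nat set set \<Rightarrow> bool" where
  "sender_anonymous P n E \<longleftrightarrow>
     (\<forall>T. T \<subseteq> {..<n} \<longrightarrow> card T < n - 1 \<longrightarrow>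
        (\<forall>m. (SUP g. guess_prob P n E T m g) = 1 / real (n - card T)))"

end

theory Submission
  imports Defs
begin

lemma prob_pair_times:
  "measure_pmf.prob (pair_pmf M N) (A \<times> B) = measure_pmf.prob M A * measure_pmf.prob N B"
proof -
  have "measure_pmf.prob (pair_pmf M N) (A \<times> B) = measure_pmf.prob (pair_pmf M N) ((A \<times> B) \<inter> set_pmf (pair_pmf M N))"
    by (rule measure_Int_set_pmf[symmetric])
  also have "(A \<times> B) \<inter> set_pmf (pair_pmf M N) = (A \<inter> set_pmf M) \<times> (B \<inter> set_pmf N)" by auto
  also have "measure_pmf.prob (pair_pmf M N) \<dots> = measure_pmf.prob M (A \<inter> set_pmf M) * measure_pmf.prob N (B \<inter> set_pmf N)"
    by (rule measure_pmf_prob_product) (auto intro: countable_subset)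
  finally show ?thesis by (simp add: measure_Int_set_pmf)
qed

lemma prob_pos_ex:
  assumes "measure_pmf.prob M A > 0" shows "\<exists>x\<in>set_pmf M. x \<in> A"
proof (rule ccontr)
  assume "\<not> ?thesis"
  then have "A \<inter> set_pmf M = {}" by auto
  then show False using assms measure_Int_set_pmf[of M A] by simp
qed

lemma pmf_le_eq:
  assumes "\<And>x. pmf Q x \<le> pmf M x" shows "Q = M"
proof (rule pmf_eqI)
  fix x
  have "measure_pmf.prob Q (UNIV - {x}) \<le> measure_pmf.prob M (UNIV - {x})"
    unfolding measure_pmf_conv_infsetsum
    by (rule infsetsum_mono_neutral_left) (auto simp: assms pmf_abs_summable intro: abs_summable_on_subset)
  moreover have "measure_pmf.prob Q (UNIV - {x}) = 1 - pmf Q x"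
    using measure_pmf.prob_compl[of "{x}" Q] by (simp add: measure_pmf_single)
  moreover have "measure_pmf.prob M (UNIV - {x}) = 1 - pmf M x"
    using measure_pmf.prob_compl[of "{x}" M] by (simp add: measure_pmf_single)
  ultimately have "1 - pmf Q x \<le> 1 - pmf M x" by simp
  then show "pmf Q x = pmf M x" using assms[of x] by simp
qed

lemma pmf_sq_eq:
  assumes "\<And>x. (pmf Q x)^2 = pmf A x * pmf B x" shows "Q = B"
proof -
  define M where "M = bind_pmf (bernoulli_pmf (1/2)) (\<lambda>c. if c then A else B)"
  have pM: "pmf M x = (pmf A x + pmf B x) / 2" for x
    unfolding M_def pmf_bind by simp
  have le: "pmf Q x \<le> pmf M x" for x
  proof -
    have "(pmf A x + pmf B x)^2 - 4 * (pmf Q x)^2 = (pmf A x - pmf B x)^2" using assms[of x]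
      by (simp add: power2_eq_square algebra_simps)
    then have "(2 * pmf Q x)^2 \<le> (pmf A x + pmf B x)^2" by (simp add: power_mult_distrib) (smt (verit) zero_le_power2)
    then have "2 * pmf Q x \<le> pmf A x + pmf B x"
      by (rule power2_le_imp_le) simp
    then show ?thesis by (simp add: pM)
  qed
  have "Q = M" by (rule pmf_le_eq[OF le])
  then have "pmf Q x = (pmf A x + pmf B x) / 2" for x using pM by simp
  have "(pmf A x - pmf B x)^2 = 0" for x
  proof -
    have "(pmf A x - pmf B x)^2 = (pmf A x + pmf B x)^2 - 4 * (pmf A x * pmf B x)"
      by (simp add: power2_eq_square algebra_simps)
    also have "pmf A x + pmf B x = 2 * pmf Q x" using \<open>\<And>x. pmf Q x = _\<close>[of x] by simp
    also have "(2 * pmf Q x)^2 = 4 * (pmf A x * pmf B x)" using assms[of x] by (simp add: power_mult_distrib)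
    finally show ?thesis by (simp add: power2_eq_square)
  qed
  then have "pmf A x = pmf B x" for x by simp
  with \<open>\<And>x. pmf Q x = _\<close> show ?thesis by (intro pmf_eqI) simp
qed

lemma run_rounds_eq:
  "run_rounds P n x k \<rho> R = t \<longleftrightarrow> length t = R \<and>
     (\<forall>r<R. t ! r = (\<lambda>p. if p < n then msg P p (x p) (key_view p k) (\<rho> p) (take r t) else undefined))"
proof (induction R arbitrary: t)
  case 0 then show ?case by auto
next
  case (Suc R)
  let ?h = "run_rounds P n x k \<rho> R"
  have hR: "length ?h = R \<and> (\<forall>r<R. ?h ! r = (\<lambda>p. if p < n then msg P p (x p) (key_view p k) (\<rho> p) (take r ?h) else undefined))"
    using Suc.IH[of ?h] by simp
  show ?case
  proof
    assume t: "run_rounds P n x k \<rho> (Suc R) = t"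
    then have t': "t = ?h @ [\<lambda>p. if p < n then msg P p (x p) (key_view p k) (\<rho> p) ?h else undefined]"
      by (simp add: Let_def)
    show "length t = Suc R \<and> (\<forall>r<Suc R. t ! r = (\<lambda>p. if p < n then msg P p (x p) (key_view p k) (\<rho> p) (take r t) else undefined))"
      using hR unfolding t' by (auto simp: nth_append less_Suc_eq)
  next
    assume A: "length t = Suc R \<and> (\<forall>r<Suc R. t ! r = (\<lambda>p. if p < n then msg P p (x p) (key_view p k) (\<rho> p) (take r t) else undefined))"
    define h where "h = butlast t"
    have lh: "length h = R" using A h_def by simp
    have th: "t = h @ [t ! R]" unfolding h_def using A
      by (metis append_butlast_last_id diff_Suc_1 last_conv_nth list.size(3) nat.distinct(1))
    have tk: "take r h = take r t" if "r \<le> R" for r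
      using that A unfolding h_def by (simp add: take_butlast)
    have "\<forall>r<R. h ! r = (\<lambda>p. if p < n then msg P p (x p) (key_view p k) (\<rho> p) (take r h) else undefined)"
    proof (intro allI impI)
      fix r assume "r < R"
      have "h ! r = t ! r" unfolding h_def using A \<open>r < R\<close> by (simp add: nth_butlast)
      moreover have ttk: "take r h = take r t" using tk \<open>r < R\<close> by simp
      ultimately show "h ! r = (\<lambda>p. if p < n then msg P p (x p) (key_view p k) (\<rho> p) (take r h) else undefined)"
        unfolding ttk using A \<open>r < R\<close> by simp
    qed
    then have "?h = h" using Suc.IH[of h] lh by simp
    moreover have "t ! R = (\<lambda>p. if p < n then msg P p (x p) (key_view p k) (\<rho> p) h else undefined)"
    proof -
      have ttR: "h = take R t" using tk[of R] lh by simp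
      show ?thesis unfolding ttR using A by simp
    qed
    ultimately show "run_rounds P n x k \<rho> (Suc R) = t" using th by (simp add: Let_def)
  qed
qed


lemma prob_ne0_ex:
  assumes "measure_pmf.prob M A \<noteq> 0" shows "\<exists>x\<in>set_pmf M. x \<in> A"
  using prob_pos_ex[of M A] assms measure_nonneg[of M A] by linarith

locale miss =
  fixes P :: "('m,'c,'r) protocol" and n :: nat and E :: "nat set set" and i j :: nat
  assumes ij: "i < n" "j < n" "i \<noteq> j" and noedge: "{i,j} \<notin> E"
    and graph: "E \<subseteq> complete_graph_edges n"
begin

definition "TT = {..<n} - {i,j}"
definition "K = key_pmf E"
definition "ST = Pi_pmf TT undefined (rand P)"
definition "xin a b = (\<lambda>p. if p = i then a else if p = j then b else None)"
definition "V a b = map_pmf (\<lambda>(k,(\<sigma>,(ri,rj))). (transcript P n (xin a b) k (\<sigma>(i:=ri, j:=rj)), k, \<sigma>))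
   (pair_pmf K (pair_pmf ST (pair_pmf (rand P i) (rand P j))))"
definition "Cset p a t k0 = {r. \<forall>q<length t. (t!q) p = msg P p a (key_view p k0) r (take q t)}"
definition "CT t k0 \<sigma>0 = (length t = rounds P \<and> (\<forall>q<length t. \<forall>p. p\<noteq>i \<longrightarrow> p\<noteq>j \<longrightarrow>
    (t!q) p = (if p<n then msg P p None (key_view p k0) (\<sigma>0 p) (take q t) else undefined)))"

lemma finTT: "finite TT" and ijTT: "i \<notin> TT" "j \<notin> TT" and univ: "{..<n} = insert i (insert j TT)"
  using ij by (auto simp: TT_def)

lemma rand_decomp: "rand_pmf P n = map_pmf (\<lambda>(\<sigma>,(ri,rj)). \<sigma>(i:=ri, j:=rj)) (pair_pmf ST (pair_pmf (rand P i) (rand P j)))"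
proof -
  have "rand_pmf P n = Pi_pmf (insert i (insert j TT)) undefined (rand P)"
    unfolding rand_pmf_def univ ..
  also have "\<dots> = do {y \<leftarrow> rand P i; y' \<leftarrow> rand P j; g \<leftarrow> ST; return_pmf (g(j:=y', i:=y))}"
    using finTT ijTT ij(3)
    by (simp add: Pi_pmf_insert' ST_def bind_assoc_pmf bind_return_pmf)
  also have "\<dots> = do {y \<leftarrow> rand P i; g \<leftarrow> ST; y' \<leftarrow> rand P j; return_pmf (g(j:=y', i:=y))}"
    by (subst bind_commute_pmf[of "rand P j"]) simp
  also have "\<dots> = do {g \<leftarrow> ST; y \<leftarrow> rand P i; y' \<leftarrow> rand P j; return_pmf (g(j:=y', i:=y))}"
    by (subst bind_commute_pmf[of "rand P i"]) simp
  also have "\<dots> = map_pmf (\<lambda>(\<sigma>,(ri,rj)). \<sigma>(i:=ri, j:=rj)) (pair_pmf ST (pair_pmf (rand P i) (rand P j)))"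
    using ij(3) by (simp add: pair_pmf_def map_pmf_def bind_assoc_pmf bind_return_pmf fun_upd_twist)
  finally show ?thesis .
qed

lemma trans_iff:
  "transcript P n (xin a b) k0 (\<sigma>0(i:=ri, j:=rj)) = t \<longleftrightarrow>
     CT t k0 \<sigma>0 \<and> ri \<in> Cset i a t k0 \<and> rj \<in> Cset j b t k0"
  using ij unfolding transcript_def run_rounds_eq CT_def Cset_def xin_def fun_eq_iff
  by (auto; metis)

definition "G = (\<lambda>(t::(nat \<Rightarrow> 'c) list,k::nat set \<Rightarrow> bool,\<sigma>::nat \<Rightarrow> 'r). (t, \<lambda>e. if e \<inter> TT \<noteq> {} then k e else False, \<lambda>p. if p \<in> TT then \<sigma> p else undefined))"

lemma adv_view_V:
  "adv_view P n E TT s m = map_pmf G (V (if s = i then Some m else None) (if s = j then Some m else None))"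
  if "s = i \<or> s = j"
proof -
  have inp: "inputs s m = xin (if s = i then Some m else None) (if s = j then Some m else None)"
    using that ij(3) by (auto simp: inputs_def xin_def fun_eq_iff)
  have rs: "(\<lambda>p. if p \<in> TT then (\<sigma>(i:=ri, j:=rj)) p else undefined) = (\<lambda>p. if p \<in> TT then \<sigma> p else undefined)"
    for \<sigma> :: "nat \<Rightarrow> 'r" and ri rj using ijTT by auto
  show ?thesis
    unfolding adv_view_def rand_decomp V_def G_def K_def[symmetric] inp
    by (simp add: pair_pmf_def map_pmf_def bind_assoc_pmf bind_return_pmf rs)
qed

lemma finE: "finite E"
proof (rule finite_subset[OF graph])
  show "finite (complete_graph_edges n)"
    by (rule finite_subset[of _ "Pow {..<n}"]) (auto simp: complete_graph_edges_def)
qed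

lemma edge_meets: assumes e: "e \<in> E" shows "e \<inter> TT \<noteq> {}"
proof -
  from e graph obtain a b where ab: "e = {a,b}" "a < n" "b < n" "a \<noteq> b"
    unfolding complete_graph_edges_def by blast
  show ?thesis
  proof
    assume "e \<inter> TT = {}"
    then have "a \<in> {i,j}" "b \<in> {i,j}" using ab unfolding TT_def by auto
    then have "e = {i,j}" using ab by auto
    then show False using e noedge by simp
  qed
qed

lemma setV: "x \<in> set_pmf (V a b) \<Longrightarrow> (\<forall>e. e \<notin> E \<longrightarrow> fst (snd x) e = False) \<and> (\<forall>p. p \<notin> TT \<longrightarrow> snd (snd x) p = undefined)"
  using set_Pi_pmf_subset[OF finE, of False "\<lambda>_. pmf_of_set (UNIV :: bool set)"]
    set_Pi_pmf_subset[OF finTT, of undefined "rand P"]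
  unfolding V_def K_def key_pmf_def ST_def by auto

lemma V_eq:
  assumes "adv_view P n E TT i m = adv_view P n E TT j m"
  shows "V (Some m) None = V None (Some m)"
proof -
  define H where "H = (\<lambda>(t::(nat \<Rightarrow> 'c) list, kk::nat set \<Rightarrow> bool, \<sigma>::nat \<Rightarrow> 'r). (t, \<lambda>e. if e \<in> E then kk e else False, \<sigma>))"
  have HG: "map_pmf H (map_pmf G (V a b)) = V a b" for a b
  proof -
    have "map_pmf H (map_pmf G (V a b)) = map_pmf (H \<circ> G) (V a b)" by (simp add: map_pmf_comp o_def)
    also have "\<dots> = V a b"
    proof (rule map_pmf_idI)
      fix x assume x: "x \<in> set_pmf (V a b)"
      obtain t k \<sigma> where xx: "x = (t,k,\<sigma>)" by (cases x) auto
      show "(H \<circ> G) x = x" using setV[OF x] edge_meets unfolding xx H_def G_def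
        by (auto simp: fun_eq_iff)
    qed
    finally show ?thesis .
  qed
  have "V (Some m) None = map_pmf H (adv_view P n E TT i m)"
    using adv_view_V[of i m] ij(3) HG by simp
  also have "\<dots> = map_pmf H (adv_view P n E TT j m)" using assms by simp
  also have "\<dots> = V None (Some m)"
    using adv_view_V[of j m] ij(3) HG by simp
  finally show ?thesis .
qed

lemma pmf_V:
  "pmf (V a b) (t,k0,\<sigma>0) = pmf K k0 * (pmf ST \<sigma>0 * (if CT t k0 \<sigma>0 then
      measure_pmf.prob (rand P i) (Cset i a t k0) * measure_pmf.prob (rand P j) (Cset j b t k0) else 0))"
proof -
  have pre: "(\<lambda>(k,(\<sigma>,(ri,rj))). (transcript P n (xin a b) k (\<sigma>(i:=ri, j:=rj)), k, \<sigma>)) -` {(t,k0,\<sigma>0)}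
     = {k0} \<times> ({\<sigma>0} \<times> (if CT t k0 \<sigma>0 then Cset i a t k0 \<times> Cset j b t k0 else {}))"
  proof (rule set_eqI)
    fix x :: "(nat set \<Rightarrow> bool) \<times> (nat \<Rightarrow> 'r) \<times> 'r \<times> 'r"
    obtain k \<sigma> ri rj where xx: "x = (k,(\<sigma>,(ri,rj)))" by (cases x) auto
    show "x \<in> (\<lambda>(k,(\<sigma>,(ri,rj))). (transcript P n (xin a b) k (\<sigma>(i:=ri, j:=rj)), k, \<sigma>)) -` {(t,k0,\<sigma>0)} \<longleftrightarrow>
       x \<in> {k0} \<times> ({\<sigma>0} \<times> (if CT t k0 \<sigma>0 then Cset i a t k0 \<times> Cset j b t k0 else {}))"
      unfolding xx by (cases "k = k0 \<and> \<sigma> = \<sigma>0") (auto simp: trans_iff)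
  qed
  show ?thesis
    unfolding V_def pmf_map pre
    by (simp add: prob_pair_times measure_pmf_single)
qed

lemma V_const:
  assumes "adv_view P n E TT i m = adv_view P n E TT j m"
  shows "V None (Some m) = V None None"
proof -
  have eq: "V (Some m) None = V None (Some m)" using V_eq[OF assms] .
  have "(pmf (V None (Some m)) w)^2 = pmf (V (Some m) (Some m)) w * pmf (V None None) w" for w
  proof -
    obtain t k0 \<sigma>0 where w: "w = (t,k0,\<sigma>0)" by (cases w) auto
    have "(pmf (V None (Some m)) w)^2 = pmf (V (Some m) None) w * pmf (V None (Some m)) w"
      using eq by (simp add: power2_eq_square)
    also have "\<dots> = pmf (V (Some m) (Some m)) w * pmf (V None None) w"
      unfolding w pmf_V by (simp add: algebra_simps)
    finally show ?thesis .
  qed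
  then show ?thesis by (rule pmf_sq_eq)
qed

lemma no_anon:
  fixes m1 m2 :: 'm
  assumes m12: "m1 \<noteq> m2"
    and anon: "\<And>m. adv_view P n E TT i m = adv_view P n E TT j m"
    and corr: "correct P n E"
  shows False
proof -
  have VV: "V None (Some m1) = V None (Some m2)" using V_const[OF anon] by simp
  obtain w where w: "w \<in> set_pmf (V None (Some m1))" using set_pmf_not_empty[of "V None (Some m1)"] by blast
  obtain t k0 \<sigma>0 where ww: "w = (t,k0,\<sigma>0)" by (cases w) auto
  have p1: "pmf (V None (Some m1)) w \<noteq> 0" using w by (simp add: set_pmf_iff)
  then have p2: "pmf (V None (Some m2)) w \<noteq> 0" using VV by simp
  from p1 have k0: "pmf K k0 \<noteq> 0" and s0: "pmf ST \<sigma>0 \<noteq> 0" and ct: "CT t k0 \<sigma>0"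
    and ai: "measure_pmf.prob (rand P i) (Cset i None t k0) \<noteq> 0"
    and b1: "measure_pmf.prob (rand P j) (Cset j (Some m1) t k0) \<noteq> 0"
    unfolding ww pmf_V by (auto split: if_splits)
  from p2 have b2: "measure_pmf.prob (rand P j) (Cset j (Some m2) t k0) \<noteq> 0"
    unfolding ww pmf_V by (auto split: if_splits)
  obtain ri where ri: "ri \<in> set_pmf (rand P i)" "ri \<in> Cset i None t k0"
    using prob_ne0_ex[OF ai] by blast
  have out_eq: "out P i None (key_view i k0) ri t = mm"
    if rj: "rj \<in> set_pmf (rand P j)" "rj \<in> Cset j (Some mm) t k0" for mm rj
  proof -
    let ?\<rho> = "\<sigma>0(i:=ri, j:=rj)"
    have tr: "transcript P n (xin None (Some mm)) k0 ?\<rho> = t"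
      using trans_iff ct ri rj by blast
    have rho: "?\<rho> \<in> set_pmf (rand_pmf P n)"
      unfolding rand_decomp set_map_pmf set_pair_pmf
      by (rule image_eqI[of _ _ "(\<sigma>0,(ri,rj))"]) (use s0 ri rj in \<open>auto simp: set_pmf_iff\<close>)
    have kk: "k0 \<in> set_pmf (key_pmf E)" using k0 by (simp add: K_def set_pmf_iff)
    have inp: "inputs j mm = xin None (Some mm)" using ij(3) by (auto simp: inputs_def xin_def fun_eq_iff)
    have "out P i (inputs j mm i) (key_view i k0) (?\<rho> i) (transcript P n (inputs j mm) k0 ?\<rho>) = mm"
      using corr ij kk rho unfolding correct_def by blast
    then show ?thesis using ij(3) tr inp by (simp add: inputs_def)
  qed
  obtain rj1 where "rj1 \<in> set_pmf (rand P j)" "rj1 \<in> Cset j (Some m1) t k0"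
    using prob_ne0_ex[OF b1] by blast
  then have "out P i None (key_view i k0) ri t = m1" by (rule out_eq)
  moreover obtain rj2 where "rj2 \<in> set_pmf (rand P j)" "rj2 \<in> Cset j (Some m2) t k0"
    using prob_ne0_ex[OF b2] by blast
  then have "out P i None (key_view i k0) ri t = m2" by (rule out_eq)
  ultimately show False using m12 by simp
qed

end

lemma prob_bind_two:
  assumes "i \<noteq> j"
  shows "measure_pmf.prob (bind_pmf (pmf_of_set {i,j}) F) X = (measure_pmf.prob (F i) X + measure_pmf.prob (F j) X)/2"
proof -
  let ?a = "measure_pmf.prob (F i) X" and ?b = "measure_pmf.prob (F j) X"
  have "emeasure (bind_pmf (pmf_of_set {i,j}) F) X = (\<integral>\<^sup>+x. emeasure (F x) X \<partial>pmf_of_set {i,j})"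
    by (rule emeasure_bind_pmf)
  also have "\<dots> = (\<Sum>x\<in>{i,j}. emeasure (F x) X) / of_nat (card {i,j})"
    by (rule nn_integral_pmf_of_set) simp_all
  also have "\<dots> = (emeasure (F i) X + emeasure (F j) X) / 2"
    using assms by simp
  also have "\<dots> = (ennreal ?a + ennreal ?b) / 2"
    by (simp only: measure_pmf.emeasure_eq_measure)
  also have "\<dots> = ennreal ((?a + ?b) / 2)"
  proof -
    have e1: "ennreal ((?a + ?b) / 2) = ennreal (?a + ?b) / ennreal 2"
      by (rule divide_ennreal[symmetric]) (auto intro: add_nonneg_nonneg)
    have e2: "ennreal (?a + ?b) = ennreal ?a + ennreal ?b" by (rule ennreal_plus) simp_all
    show ?thesis unfolding e1 e2 by simp
  qed
  finally have "ennreal (measure_pmf.prob (bind_pmf (pmf_of_set {i,j}) F) X) = ennreal ((?a + ?b) / 2)"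
    by (simp add: measure_pmf.emeasure_eq_measure)
  then show ?thesis by (subst (asm) ennreal_inj) simp_all
qed

lemma card_complete: "card (complete_graph_edges n) = n choose 2"
proof -
  have "complete_graph_edges n = {B. B \<subseteq> {..<n} \<and> card B = 2}"
    unfolding complete_graph_edges_def by (auto simp: card_2_iff)
  then show ?thesis using n_subsets[of "{..<n}" 2] by simp
qed

lemma choose2_real: "real (n choose 2) = real n * (real n - 1) / 2"
proof -
  have "even (n * (n - 1))" by (cases "even n") auto
  then have "2 * (n * (n - 1) div 2) = n * (n - 1)" by simp
  then have "2 * real (n choose 2) = real n * real (n - 1)" unfolding choose_two
    by (metis of_nat_mult of_nat_numeral)
  moreover have "real (n - 1) = real n - 1 \<or> n = 0" by auto
  ultimately show ?thesis by auto
qed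

lemma prob_compl': "measure_pmf.prob M (- A) = 1 - measure_pmf.prob M A"
  using measure_pmf.prob_compl[of A M] by (simp add: Compl_eq_Diff_UNIV)

lemma anon_eq:
  assumes anon: "sender_anonymous P n E" and ij: "i < n" "j < n" "i \<noteq> j"
  shows "adv_view P n E ({..<n} - {i,j}) i m = adv_view P n E ({..<n} - {i,j}) j m"
proof -
  define T where "T = {..<n} - {i,j}"
  have cT: "card T = n - 2" unfolding T_def using ij by (subst card_Diff_subset) auto
  have n2: "n \<ge> 2" using ij by auto
  have cT2: "card T < n - 1" using cT n2 by simp
  have nT: "n - card T = 2" using cT n2 by simp
  have DT: "{..<n} - T = {i,j}" using ij by (auto simp: T_def)
  have Tsub: "T \<subseteq> {..<n}" unfolding T_def by auto
  have "(SUP g. guess_prob P n E T m g) = 1 / real (n - card T)"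
    using anon cT2 Tsub unfolding sender_anonymous_def by blast
  then have SUP: "(SUP g. guess_prob P n E T m g) = 1/2" unfolding nT by simp
  have gp: "guess_prob P n E T m g =
      (measure_pmf.prob (adv_view P n E T i m) {v. g v = i} + measure_pmf.prob (adv_view P n E T j m) {v. g v = j})/2" for g
  proof -
    have inner: "bind_pmf (adv_view P n E T s m) (\<lambda>v. return_pmf (s, v)) = map_pmf (Pair s) (adv_view P n E T s m)" for s
      by (simp add: map_pmf_def)
    have pre: "Pair s -` {(s', v). g v = s'} = {v. g v = s}" for s by auto
    show ?thesis unfolding guess_prob_def DT inner prob_bind_two[OF ij(3)] measure_map_pmf pre ..
  qed
  have bdd: "bdd_above (range (guess_prob P n E T m))"
  proof (rule bdd_aboveI2)
    fix g show "guess_prob P n E T m g \<le> 1" unfolding guess_prob_def by (rule measure_pmf.prob_le_1)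
  qed
  have le: "guess_prob P n E T m g \<le> 1/2" for g
    using cSUP_upper[OF UNIV_I bdd, of g] SUP by simp
  have meq: "measure_pmf.prob (adv_view P n E T i m) A = measure_pmf.prob (adv_view P n E T j m) A" for A
  proof -
    have s1: "{v. (\<lambda>v. if v \<in> A then i else j) v = i} = A" "{v. (\<lambda>v. if v \<in> A then i else j) v = j} = - A"
      using ij(3) by auto
    have s2: "{v. (\<lambda>v. if v \<in> A then j else i) v = i} = - A" "{v. (\<lambda>v. if v \<in> A then j else i) v = j} = A"
      using ij(3) by auto
    have "measure_pmf.prob (adv_view P n E T i m) A \<le> measure_pmf.prob (adv_view P n E T j m) A"
      using le[of "\<lambda>v. if v \<in> A then i else j"] unfolding gp s1 prob_compl' by simp
    moreover have "measure_pmf.prob (adv_view P n E T j m) A \<le> measure_pmf.prob (adv_view P n E T i m) A"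
      using le[of "\<lambda>v. if v \<in> A then j else i"] unfolding gp s2 prob_compl' by simp
    ultimately show ?thesis by simp
  qed
  show ?thesis unfolding T_def[symmetric]
    by (rule pmf_eqI) (simp add: measure_pmf_single[symmetric] meq)
qed

theorem mainTheorem5:
  fixes P :: "('m, 'c, 'r) protocol" and n :: nat and E :: "nat set set"
  assumes two_messages: "\<exists>m1 m2 :: 'm. m1 \<noteq> m2"
    and graph: "E \<subseteq> complete_graph_edges n"
    and correct: "correct P n E"
    and anonymous: "sender_anonymous P n E"
  shows "E = complete_graph_edges n \<and> real n * (real n - 1) / 2 \<le> real (card E)"
proof (cases "E = complete_graph_edges n")
  case True
  then show ?thesis using card_complete choose2_real by simp
next
  case False
  then obtain e where "e \<in> complete_graph_edges n" "e \<notin> E" using graph by blast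
  then obtain i j where ij: "i < n" "j < n" "i \<noteq> j" "{i,j} \<notin> E"
    unfolding complete_graph_edges_def by blast
  interpret miss P n E i j using ij graph by unfold_locales auto
  obtain m1 m2 :: 'm where "m1 \<noteq> m2" using two_messages by blast
  have "False"
  proof (rule no_anon[OF \<open>m1 \<noteq> m2\<close> _ correct])
    fix m show "adv_view P n E TT i m = adv_view P n E TT j m"
      unfolding TT_def by (rule anon_eq[OF anonymous ij(1-3)])
  qed
  then show ?thesis ..
qed

end
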